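(* For every $q\in K(\!(\mathbf{t})\!)^\circ$ there exist an integer $n\ge1$ and elements $\alpha_1,\dots,\alpha_n\in K$ such that $\operatorname{trop}\big(\prod_{k=1}^n(q-\alpha_k)\big)\ll 1$.
   Context: $K$ is a field of characteristic zero, $\mathbf{t}=(t_1,\dots,t_m)$, $K(\!(\mathbf{t})\!)=\operatorname{Frac}K[\![\mathbf{t}]\!]$. $V\mathbb{B}[\mathbf{t}]$ is the semiring of subsets of $\mathbb{N}^m$ equal to the vertex set of their Newton polyhedron $\operatorname{conv}(\cdot)+\mathbb{R}^m_{\ge0}$, with $a\oplus b$ = vertices of the Newton polyhedron of $a\cup b$, $a\odot b$ = vertices of that of $a+b$; order $a\le b$ iff $a\oplus b=b$. $V\mathbb{B}(\mathbf{t})$ is its fraction semifield, ordered by $a/b\le c/d$ iff $a\odot d\le b\odot c$. $\operatorname{trop}(f)$ is the vertex set of the Newton polyhedron of $\operatorname{Supp}(f)$, $\operatorname{trop}(f/g)=\operatorname{trop}(f)/\operatorname{trop}(g)$, $K(\!(\mathbf{t})\!)^\circ=\{q:\operatorname{trop}(q)\le1\}$. For $a\le b$ in $V\mathbb{B}[\mathbf{t}]$, $a\ll b$ means $a\cap b=\emptyset$; for $\frac ab\le\frac cd$ in $V\mathbb{B}(\mathbf{t})$, $\frac ab\ll\frac cd$ means $a\odot d\ll c\odot b$. *)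

theory Defs
  imports "HOL-Analysis.Analysis"
begin

text \<open>Exponent vectors in N^m are functions 'n \<Rightarrow> nat for a finite index type 'n
  (m = CARD('n)). Multivariate formal power series K[[t]] are coefficient functions
  ('n \<Rightarrow> nat) \<Rightarrow> 'a.\<close>

type_synonym 'n expo = "'n \<Rightarrow> nat"
type_synonym ('n, 'a) mps = "'n expo \<Rightarrow> 'a"

definition expo_add :: "'n expo \<Rightarrow> 'n expo \<Rightarrow> 'n expo" where
  "expo_add a b = (\<lambda>i. a i + b i)"

definition expo_zero :: "'n expo" where
  "expo_zero = (\<lambda>_. 0)"

text \<open>Embedding of N^m into R^m.\<close>
definition emb :: "('n::finite) expo \<Rightarrow> real^'n" where
  "emb e = (\<chi> i. real (e i))"

text \<open>Newton polyhedron conv(A) + R^m_{\<ge>0}.\<close>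
definition newton :: "('n::finite) expo set \<Rightarrow> (real^'n) set" where
  "newton A = {x + y | x y. x \<in> convex hull (emb ` A) \<and> (\<forall>i. 0 \<le> y $ i)}"

text \<open>Vertex set (as a subset of N^m) of the Newton polyhedron of A.\<close>
definition vert :: "('n::finite) expo set \<Rightarrow> 'n expo set" where
  "vert A = {e \<in> A. emb e extreme_point_of newton A}"

text \<open>Operations and order of V B[t].\<close>
definition vb_plus :: "('n::finite) expo set \<Rightarrow> 'n expo set \<Rightarrow> 'n expo set" where
  "vb_plus a b = vert (a \<union> b)"

definition vb_times :: "('n::finite) expo set \<Rightarrow> 'n expo set \<Rightarrow> 'n expo set" where
  "vb_times a b = vert {expo_add x y | x y. x \<in> a \<and> y \<in> b}"

definition vb_one :: "'n expo set" where
  "vb_one = {expo_zero}"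

definition vb_le :: "('n::finite) expo set \<Rightarrow> 'n expo set \<Rightarrow> bool" where
  "vb_le a b \<longleftrightarrow> vb_plus a b = b"

text \<open>a \<ll> b for a \<le> b in V B[t].\<close>
definition vb_ll :: "('n::finite) expo set \<Rightarrow> 'n expo set \<Rightarrow> bool" where
  "vb_ll a b \<longleftrightarrow> vb_le a b \<and> a \<inter> b = {}"

text \<open>Fractions a/b of V B(t), represented as pairs (a, b).\<close>
definition vbf_le :: "('n::finite) expo set \<times> 'n expo set \<Rightarrow> 'n expo set \<times> 'n expo set \<Rightarrow> bool" where
  "vbf_le p q = (case p of (a, b) \<Rightarrow> case q of (c, d) \<Rightarrow> vb_le (vb_times a d) (vb_times b c))"

definition vbf_ll :: "('n::finite) expo set \<times> 'n expo set \<Rightarrow> 'n expo set \<times> 'n expo set \<Rightarrow> bool" where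
  "vbf_ll p q = (case p of (a, b) \<Rightarrow> case q of (c, d) \<Rightarrow>
      vbf_le (a, b) (c, d) \<and> vb_ll (vb_times a d) (vb_times c b))"

definition vbf_one :: "'n expo set \<times> 'n expo set" where
  "vbf_one = (vb_one, vb_one)"

text \<open>Power series arithmetic.\<close>
definition mps_supp :: "('n, 'a::zero) mps \<Rightarrow> 'n expo set" where
  "mps_supp f = {e. f e \<noteq> 0}"

definition mps_mult :: "('n::finite, 'a::comm_ring_1) mps \<Rightarrow> ('n, 'a) mps \<Rightarrow> ('n, 'a) mps" where
  "mps_mult f g = (\<lambda>c. \<Sum>(a, b) \<in> {(a, b). expo_add a b = c}. f a * g b)"

definition mps_one :: "('n, 'a::comm_ring_1) mps" where
  "mps_one = (\<lambda>e. if e = expo_zero then 1 else 0)"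

definition mps_const :: "'a::comm_ring_1 \<Rightarrow> ('n, 'a) mps" where
  "mps_const c = (\<lambda>e. if e = expo_zero then c else 0)"

definition mps_diff :: "('n, 'a::comm_ring_1) mps \<Rightarrow> ('n, 'a) mps \<Rightarrow> ('n, 'a) mps" where
  "mps_diff f g = (\<lambda>e. f e - g e)"

text \<open>Product of F 0, ..., F (n-1).\<close>
primrec mps_prod :: "(nat \<Rightarrow> ('n::finite, 'a::comm_ring_1) mps) \<Rightarrow> nat \<Rightarrow> ('n, 'a) mps" where
  "mps_prod F 0 = mps_one"
| "mps_prod F (Suc n) = mps_mult (mps_prod F n) (F n)"

definition mps_pow :: "('n::finite, 'a::comm_ring_1) mps \<Rightarrow> nat \<Rightarrow> ('n, 'a) mps" where
  "mps_pow f n = mps_prod (\<lambda>_. f) n"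

text \<open>trop of a power series: vertex set of the Newton polyhedron of its support.\<close>
definition trop :: "('n::finite, 'a::comm_ring_1) mps \<Rightarrow> 'n expo set" where
  "trop f = vert (mps_supp f)"

text \<open>trop of the fraction f/g \<in> K((t)), as the pair trop f / trop g.\<close>
definition trop_frac :: "('n::finite, 'a::comm_ring_1) mps \<Rightarrow> ('n, 'a) mps \<Rightarrow> 'n expo set \<times> 'n expo set" where
  "trop_frac f g = (trop f, trop g)"

end

theory Submission
  imports Defs
begin

lemma emb_add: "emb (expo_add a b) = emb a + emb b"
  by (simp add: emb_def expo_add_def vec_eq_iff)
lemma emb_zero: "emb expo_zero = 0"
  by (simp add: emb_def expo_zero_def vec_eq_iff)
lemma emb_inj: "emb a = emb b \<Longrightarrow> a = b"
  by (auto simp: emb_def vec_eq_iff fun_eq_iff)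
lemma emb_eq_iff: "emb a = emb b \<longleftrightarrow> a = b"
  using emb_inj by auto
lemma emb_nonneg: "0 \<le> emb a $ i"
  by (simp add: emb_def)
lemma emb_smult: "emb (\<lambda>i. m * v i) = real m *\<^sub>R emb v"
  by (simp add: emb_def vec_eq_iff)

lemma orth_convex: "convex {y::real^'n. \<forall>i. 0 \<le> y $ i}"
  unfolding convex_def by auto

lemma orth_closed: "closed {y::real^'n. \<forall>i. 0 \<le> y $ i}"
proof -
  have "{y::real^'n. \<forall>i. 0 \<le> y $ i} = (\<Inter>i. {y. 0 \<le> y $ i})" by auto
  moreover have "closed {y::real^'n. 0 \<le> y $ i}" for i
    by (rule closed_Collect_le) (auto intro: continuous_intros)
  ultimately show ?thesis by auto
qed

lemma newton_alt: "newton A = (\<Union>x\<in> convex hull (emb ` A). \<Union>y \<in> {y. \<forall>i. 0 \<le> y $ i}. {x + y})"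
  unfolding newton_def by auto

lemma newton_convex: "convex (newton A)"
  unfolding newton_alt by (intro convex_sums convex_convex_hull orth_convex)

lemma newton_closed: "finite A \<Longrightarrow> closed (newton A)"
  unfolding newton_alt by (intro compact_closed_sums orth_closed compact_convex_hull finite_imp_compact finite_imageI)

lemma emb_in_newton: "a \<in> A \<Longrightarrow> emb a \<in> newton A"
  unfolding newton_def by (rule CollectI, rule exI[of _ "emb a"], rule exI[of _ 0]) (auto intro: hull_inc)

lemma hull_in_newton: "c \<in> convex hull (emb ` A) \<Longrightarrow> c \<in> newton A"
  unfolding newton_def by (rule CollectI, rule exI[of _ c], rule exI[of _ 0]) auto

lemma newton_up: "x \<in> newton A \<Longrightarrow> \<forall>i. 0 \<le> y $ i \<Longrightarrow> x + y \<in> newton A"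
  unfolding newton_def
  by clarsimp (metis (no_types, lifting) add.assoc add_nonneg_nonneg vector_add_component)

lemma newton_sub: assumes "emb ` A \<subseteq> newton B" shows "newton A \<subseteq> newton B"
proof
  fix x assume "x \<in> newton A"
  then obtain c y where x: "x = c + y" "c \<in> convex hull (emb ` A)" "\<forall>i. 0 \<le> y $ i"
    unfolding newton_def by auto
  have "convex hull (emb ` A) \<subseteq> newton B"
    using assms newton_convex by (intro hull_minimal) auto
  then show "x \<in> newton B" using x newton_up[of c B y] by auto
qed

lemma newton_mono: "A \<subseteq> B \<Longrightarrow> newton A \<subseteq> newton B"
  by (intro newton_sub) (auto intro: emb_in_newton)

lemma newton_nonneg: assumes "x \<in> newton A" shows "0 \<le> x $ i"
proof -
  have "convex hull (emb ` A) \<subseteq> {y. \<forall>i. 0 \<le> y $ i}"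
    by (intro hull_minimal orth_convex) (auto simp: emb_nonneg)
  then have hc: "\<And>c. c \<in> convex hull (emb ` A) \<Longrightarrow> 0 \<le> c $ i" by blast
  obtain c y where "x = c + y" "c \<in> convex hull (emb ` A)" "\<forall>i. 0 \<le> y $ i"
    using assms unfolding newton_def by blast
  with hc have "0 \<le> c $ i" "0 \<le> y $ i" by auto
  then show ?thesis using \<open>x = c + y\<close> by simp
qed

lemma newton_empty: "newton {} = {}"
  unfolding newton_def by auto

lemma newton_ne: "A \<noteq> {} \<Longrightarrow> newton A \<noteq> {}"
  using emb_in_newton by blast

lemma ext_mid: "x extreme_point_of S \<Longrightarrow> u \<in> S \<Longrightarrow> v \<in> S \<Longrightarrow> x = midpoint u v \<Longrightarrow> u = v"
  unfolding extreme_point_of_def using midpoint_in_open_segment by blast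

lemma ext_in_emb: assumes "x extreme_point_of newton A" shows "x \<in> emb ` A"
proof -
  from assms have xN: "x \<in> newton A" by (simp add: extreme_point_of_def)
  then obtain c y where x: "x = c + y" "c \<in> convex hull (emb ` A)" "\<forall>i. 0 \<le> y $ i"
    unfolding newton_def by auto
  have cN: "c \<in> newton A" using x(2) by (rule hull_in_newton)
  have "y = 0"
  proof (rule ccontr)
    assume "y \<noteq> 0"
    have u: "c + (1/2) *\<^sub>R y \<in> newton A" using newton_up[OF cN, of "(1/2) *\<^sub>R y"] x(3) by auto
    have v: "c + (3/2) *\<^sub>R y \<in> newton A" using newton_up[OF cN, of "(3/2) *\<^sub>R y"] x(3) by auto
    have "x = midpoint (c + (1/2) *\<^sub>R y) (c + (3/2) *\<^sub>R y)"
      unfolding x(1) midpoint_def by (simp add: vec_eq_iff algebra_simps)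
    from ext_mid[OF assms u v this] have "(1/2) *\<^sub>R y = (3/2) *\<^sub>R y" by simp
    then have "y = 0" by (simp add: vec_eq_iff)
    with \<open>y \<noteq> 0\<close> show False by simp
  qed
  then have xc: "x = c" using x by simp
  have "x extreme_point_of convex hull (emb ` A)"
    using assms x(2) hull_in_newton unfolding extreme_point_of_def xc by blast
  then show ?thesis by (rule extreme_point_of_convex_hull)
qed

lemma vert_sub: "vert A \<subseteq> A"
  by (auto simp: vert_def)

lemma vert_minimal: assumes "e \<in> vert A" "a \<in> A" "a \<le> e" shows "a = e"
proof (rule ccontr)
  assume ne: "a \<noteq> e"
  have ext: "emb e extreme_point_of newton A" and eA: "e \<in> A" using assms(1) by (auto simp: vert_def)
  define y where "y = emb e - emb a"
  have y0: "\<forall>i. 0 \<le> y $ i" using assms(3) by (auto simp: y_def emb_def le_fun_def)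
  have u: "emb a \<in> newton A" using assms(2) by (rule emb_in_newton)
  have v: "emb a + 2 *\<^sub>R y \<in> newton A" using newton_up[OF u, of "2 *\<^sub>R y"] y0 by auto
  have "emb e = midpoint (emb a) (emb a + 2 *\<^sub>R y)"
    unfolding y_def midpoint_def by (simp add: vec_eq_iff algebra_simps)
  from ext_mid[OF ext u v this] have "y = 0" by (simp add: vec_eq_iff)
  then have "emb e = emb a" by (simp add: y_def)
  with ne show False using emb_inj by metis
qed

definition mins :: "('n \<Rightarrow> nat) set \<Rightarrow> ('n \<Rightarrow> nat) set" where
  "mins A = {a \<in> A. \<forall>b\<in>A. b \<le> a \<longrightarrow> b = a}"

lemma nat_incsub: fixes t :: "nat \<Rightarrow> nat"
  shows "\<exists>r::nat\<Rightarrow>nat. strict_mono r \<and> (\<forall>i j. i \<le> j \<longrightarrow> t (r i) \<le> t (r j))"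
proof -
  obtain f where f: "strict_mono f" "monoseq (\<lambda>n. t (f n))" using seq_monosub by blast
  show ?thesis
  proof (cases "\<forall>m n. m \<le> n \<longrightarrow> t (f m) \<le> t (f n)")
    case True then show ?thesis using f by blast
  next
    case False
    with f(2) have dec: "\<forall>m n. m \<le> n \<longrightarrow> t (f n) \<le> t (f m)" unfolding monoseq_def by blast
    obtain N where N: "\<forall>n. t (f N) \<le> t (f n)"
      using ex_has_least_nat[of "\<lambda>_. True" 0 "\<lambda>n. t (f n)"] by auto
    define r where "r n = f (n + N)" for n
    have "strict_mono r" using f(1) by (auto simp: r_def strict_mono_def)
    moreover have "t (r i) = t (f N)" for i
    proof -
      have "t (f (i + N)) \<le> t (f N)" using dec by simp
      moreover have "t (f N) \<le> t (f (i + N))" using N by simp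
      ultimately show ?thesis unfolding r_def by simp
    qed
    ultimately show ?thesis by auto
  qed
qed

lemma dickson_gen:
  fixes s :: "nat \<Rightarrow> 'n \<Rightarrow> nat"
  assumes "finite I"
  shows "\<exists>r::nat\<Rightarrow>nat. strict_mono r \<and> (\<forall>i j. i \<le> j \<longrightarrow> (\<forall>k\<in>I. s (r i) k \<le> s (r j) k))"
  using assms
proof (induction I rule: finite_induct)
  case empty then show ?case by (intro exI[of _ id]) (auto simp: strict_mono_def)
next
  case (insert k I)
  then obtain r1 :: "nat \<Rightarrow> nat" where r1: "strict_mono r1" "\<forall>i j. i \<le> j \<longrightarrow> (\<forall>k\<in>I. s (r1 i) k \<le> s (r1 j) k)"
    by blast
  obtain r2 :: "nat \<Rightarrow> nat" where r2: "strict_mono r2" "\<forall>i j. i \<le> j \<longrightarrow> s (r1 (r2 i)) k \<le> s (r1 (r2 j)) k"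
    using nat_incsub[of "\<lambda>n. s (r1 n) k"] by blast
  have "strict_mono (r1 \<circ> r2)" using r1(1) r2(1) by (rule strict_mono_o)
  moreover have "\<forall>i j. i \<le> j \<longrightarrow> (\<forall>k'\<in>insert k I. s ((r1 \<circ> r2) i) k' \<le> s ((r1 \<circ> r2) j) k')"
  proof (intro allI impI ballI)
    fix i j k' assume ij: "(i::nat) \<le> j" and k': "k' \<in> insert k I"
    have "r2 i \<le> r2 j" using strict_mono_less_eq[OF r2(1)] ij by simp
    then show "s ((r1 \<circ> r2) i) k' \<le> s ((r1 \<circ> r2) j) k'"
      using r1(2) r2(2) ij k' by auto
  qed
  ultimately show ?case by blast
qed

lemma dickson:
  fixes s :: "nat \<Rightarrow> 'n::finite \<Rightarrow> nat"
  shows "\<exists>i j. i < j \<and> s i \<le> s j"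
proof -
  obtain r :: "nat \<Rightarrow> nat" where r: "strict_mono r" "\<forall>i j. i \<le> j \<longrightarrow> (\<forall>k\<in>UNIV. s (r i) k \<le> s (r j) k)"
    using dickson_gen[of UNIV s] by auto
  have "r 0 < r 1" using r(1) by (simp add: strict_mono_def)
  moreover have "s (r 0) \<le> s (r 1)" using r(2) by (auto simp: le_fun_def)
  ultimately show ?thesis by blast
qed

lemma mins_finite: "finite (mins (A :: ('n::finite \<Rightarrow> nat) set))"
proof (rule ccontr)
  assume "infinite (mins A)"
  then obtain s :: "nat \<Rightarrow> 'n \<Rightarrow> nat" where s: "inj s" "range s \<subseteq> mins A"
    using infinite_iff_countable_subset[THEN iffD1] by metis
  obtain i j where ij: "i < j" "s i \<le> s j" using dickson by blast
  have "s j \<in> mins A" "s i \<in> A" using s(2) by (auto simp: mins_def)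
  then have "s i = s j" using ij(2) by (auto simp: mins_def)
  then show False using s(1) ij(1) by (auto dest: injD)
qed

lemma mins_below:
  fixes A :: "('n::finite \<Rightarrow> nat) set"
  assumes "a \<in> A" shows "\<exists>m\<in>mins A. m \<le> a"
proof -
  obtain x where x: "x \<in> A" "x \<le> a" "\<forall>y. y \<in> A \<and> y \<le> a \<longrightarrow> sum x UNIV \<le> sum y UNIV"
    using ex_has_least_nat[of "\<lambda>b. b \<in> A \<and> b \<le> a" a "\<lambda>b. sum b UNIV"] assms by auto
  have "x \<in> mins A"
    unfolding mins_def
  proof (intro CollectI conjI ballI impI)
    fix b assume b: "b \<in> A" "b \<le> x"
    have "b \<le> a" using b(2) x(2) by (rule order_trans)
    then have "sum x UNIV \<le> sum b UNIV" using x(3) b(1) by blast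
    moreover have "sum b UNIV \<le> sum x UNIV" using b(2) by (intro sum_mono) (auto simp: le_fun_def)
    ultimately have eq: "sum b UNIV = sum x UNIV" by simp
    have "b i = x i" for i
      using sum_mono_inv[OF eq, of i] b(2) by (simp add: le_fun_def)
    then show "b = x" by (simp add: fun_eq_iff)
  next
    show "x \<in> A" by (rule x(1))
  qed
  then show ?thesis using x by blast
qed

lemma newton_mins: "newton (mins A) = newton (A :: ('n::finite \<Rightarrow> nat) set)"
proof
  show "newton (mins A) \<subseteq> newton A" by (rule newton_mono) (auto simp: mins_def)
  show "newton A \<subseteq> newton (mins A)"
  proof (rule newton_sub, clarify)
    fix a assume "a \<in> A"
    then obtain m where m: "m \<in> mins A" "m \<le> a" using mins_below by blast
    have "emb a = emb m + (emb a - emb m)" by simp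
    moreover have "\<forall>i. 0 \<le> (emb a - emb m) $ i" using m(2) by (auto simp: emb_def le_fun_def)
    ultimately show "emb a \<in> newton (mins A)" using newton_up[OF emb_in_newton[OF m(1)]] by metis
  qed
qed

lemma vert_in_mins: "vert A \<subseteq> mins A"
  using vert_minimal vert_sub unfolding mins_def by blast

lemma vert_finite: "finite (vert (A :: ('n::finite \<Rightarrow> nat) set))"
  using finite_subset[OF vert_in_mins mins_finite] .

lemma vert_mins: "vert (mins A) = vert (A :: ('n::finite \<Rightarrow> nat) set)"
  using vert_in_mins[of A] unfolding vert_def newton_mins by (auto simp: mins_def)

lemma sep_weight:
  fixes M :: "('n::finite \<Rightarrow> nat) set"
  assumes "finite M" "emb p \<notin> newton (M - {p})"
  shows "\<exists>w::real^'n. (\<forall>i. 0 < w $ i) \<and> (\<forall>x\<in>newton (M - {p}). inner w (emb p) < inner w x)"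
proof (cases "M - {p} = {}")
  case True
  then have "newton (M - {p}) = {}" by (simp only: newton_empty)
  then show ?thesis by (intro exI[of _ "\<chi> i. 1"]) auto
next
  case False
  let ?C = "newton (M - {p})"
  obtain x0 where x0: "x0 \<in> ?C" using newton_ne[OF False] by blast
  obtain a b where ab: "inner a (emb p) < b" "\<forall>x\<in>?C. b < inner a x"
    using separating_hyperplane_closed_point[OF newton_convex newton_closed assms(2)] assms(1) by auto
  have a0: "0 \<le> a $ i" for i
  proof (rule ccontr)
    assume neg: "\<not> 0 \<le> a $ i"
    define t where "t = (inner a x0 - b) / (- (a $ i))"
    have "b < inner a x0" using ab(2) x0 by blast
    then have t0: "0 \<le> t" using neg unfolding t_def by (intro divide_nonneg_pos) auto
    have "\<forall>j. 0 \<le> axis i t $ j" using t0 by (auto simp: axis_def)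
    then have "x0 + axis i t \<in> ?C" using newton_up[OF x0] by blast
    then have "b < inner a (x0 + axis i t)" using ab(2) by blast
    also have "inner a (x0 + axis i t) = inner a x0 + a $ i * t" by (simp add: inner_add_right inner_axis)
    also have "\<dots> = b" using neg by (simp add: t_def field_simps)
    finally show False by simp
  qed
  define s where "s = (\<Sum>i\<in>UNIV. emb p $ i)"
  have s0: "0 \<le> s" unfolding s_def by (intro sum_nonneg) (simp add: emb_nonneg)
  define e where "e = (b - inner a (emb p)) / (1 + s)"
  have e0: "0 < e" using ab(1) s0 by (simp add: e_def)
  define w where "w = a + e *\<^sub>R (\<chi> i. (1::real))"
  have inw: "inner w x = inner a x + e * (\<Sum>i\<in>UNIV. x $ i)" for x
    by (simp add: w_def inner_add_left inner_vec_def sum_distrib_left distrib_right sum.distrib)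
  have wpos: "\<forall>i. 0 < w $ i" using a0 e0 by (simp add: w_def add_nonneg_pos)
  have wp: "inner w (emb p) < b"
  proof -
    have "e * s < e * (1 + s)" using e0 by simp
    also have "e*(1+s) = b - inner a (emb p)" using s0 by (simp add: e_def)
    finally show ?thesis by (simp add: inw s_def)
  qed
  have "inner w (emb p) < inner w x" if "x \<in> ?C" for x
  proof -
    have "0 \<le> (\<Sum>i\<in>UNIV. x $ i)" using newton_nonneg[OF that] by (simp add: sum_nonneg)
    then have "inner a x \<le> inner w x" using e0 by (simp add: inw)
    moreover have "b < inner a x" using ab(2) that by blast
    ultimately show ?thesis using wp by linarith
  qed
  with wpos show ?thesis by blast
qed

lemma sep_point:
  fixes M :: "('n::finite \<Rightarrow> nat) set"
  assumes "finite M" "p \<in> M" "emb p \<notin> newton (M - {p})"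
  shows "emb p extreme_point_of newton M"
proof -
  obtain w :: "real^'n" where w: "\<forall>i. 0 < w $ i" "\<forall>x\<in>newton (M - {p}). inner w (emb p) < inner w x"
    using sep_weight[OF assms(1,3)] by blast
  have hc: "inner w (emb p) \<le> inner w c \<and> (inner w c = inner w (emb p) \<longrightarrow> c = emb p)"
    if c: "c \<in> convex hull (emb ` M)" for c
  proof (cases "M - {p} = {}")
    case True
    then have "M = {p}" using assms(2) by auto
    then show ?thesis using c by simp
  next
    case False
    have "emb ` M = insert (emb p) (emb ` (M - {p}))" using assms(2) by auto
    with c obtain u v d where uvd: "0 \<le> u" "0 \<le> v" "u + v = 1" "d \<in> convex hull (emb ` (M - {p}))"
       "c = u *\<^sub>R emb p + v *\<^sub>R d"
      using convex_hull_insert[of "emb ` (M - {p})" "emb p"] False by auto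
    have dgt: "inner w (emb p) < inner w d" using w(2) hull_in_newton[OF uvd(4)] by blast
    have "inner w c - inner w (emb p) = v * (inner w d - inner w (emb p))"
    proof -
      have "u = 1 - v" using uvd(3) by simp
      then have "u * inner w (emb p) = inner w (emb p) - v * inner w (emb p)"
        by (simp add: left_diff_distrib)
      moreover have "inner w c = u * inner w (emb p) + v * inner w d"
        by (simp add: uvd(5) inner_add_right)
      ultimately show ?thesis by (simp add: algebra_simps)
    qed
    moreover have "0 \<le> v * (inner w d - inner w (emb p))" using uvd(2) dgt by simp
    moreover have "v * (inner w d - inner w (emb p)) = 0 \<Longrightarrow> c = emb p"
      using dgt uvd by (simp add: uvd(5))
    ultimately show ?thesis by auto
  qed
  have key: "inner w (emb p) \<le> inner w x \<and> (inner w x = inner w (emb p) \<longrightarrow> x = emb p)"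
    if x: "x \<in> newton M" for x
  proof -
    obtain c y where cy: "x = c + y" "c \<in> convex hull (emb ` M)" "\<forall>i. 0 \<le> y $ i"
      using x unfolding newton_def by auto
    have terms: "\<forall>i\<in>UNIV. 0 \<le> w $ i * y $ i" using w(1) cy(3) by (simp add: less_imp_le)
    have y0: "0 \<le> inner w y" unfolding inner_vec_def using terms by (simp add: sum_nonneg)
    have y1: "inner w y = 0 \<Longrightarrow> y = 0"
    proof -
      assume "inner w y = 0"
      then have "\<forall>i\<in>UNIV. w $ i * y $ i = 0"
        using sum_nonneg_eq_0_iff[of UNIV "\<lambda>i. w $ i * y $ i"] terms by (simp add: inner_vec_def)
      then show "y = 0" using w(1) by (simp add: vec_eq_iff) (metis less_irrefl)
    qed
    have "inner w x = inner w c + inner w y" by (simp add: cy(1) inner_add_right)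
    then show ?thesis using hc[OF cy(2)] y0 y1 cy(1) by auto
  qed
  have pin: "emb p \<in> newton M" using assms(2) by (rule emb_in_newton)
  show ?thesis
  proof (rule extreme_point_of_Int_supporting_hyperplane_ge[where a=w and b="inner w (emb p)"])
    show "newton M \<inter> {x. w \<bullet> x = w \<bullet> emb p} = {emb p}" using key pin by auto
    show "\<And>x. x \<in> newton M \<Longrightarrow> w \<bullet> emb p \<le> w \<bullet> x" using key by blast
  qed
qed

lemma newton_vert_fin:
  fixes M :: "('n::finite \<Rightarrow> nat) set"
  assumes "finite M" shows "newton M \<subseteq> newton (vert M)"
  using assms
proof (induction "card M" arbitrary: M rule: less_induct)
  case less
  show ?case
  proof (cases "M \<subseteq> vert M")
    case True then show ?thesis by (rule newton_mono)
  next
    case False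
    then obtain p where p: "p \<in> M" "p \<notin> vert M" by blast
    then have np: "\<not> emb p extreme_point_of newton M" by (simp add: vert_def)
    then have pin: "emb p \<in> newton (M - {p})" using sep_point[OF less.prems p(1)] by blast
    have eqN: "newton (M - {p}) = newton M"
    proof
      show "newton (M - {p}) \<subseteq> newton M" by (rule newton_mono) auto
      show "newton M \<subseteq> newton (M - {p})"
        by (rule newton_sub) (use pin in \<open>auto intro: emb_in_newton\<close>)
    qed
    have eqV: "vert (M - {p}) = vert M" using np unfolding vert_def eqN by auto
    have "card (M - {p}) < card M" using card_Diff1_less[OF less.prems p(1)] .
    then have "newton (M - {p}) \<subseteq> newton (vert (M - {p}))" using less by auto
    then show ?thesis using eqN eqV by simp
  qed
qed

lemma newton_vert: "newton (vert A) = newton (A :: ('n::finite \<Rightarrow> nat) set)"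
proof
  show "newton (vert A) \<subseteq> newton A" by (rule newton_mono[OF vert_sub])
  have "newton A = newton (mins A)" by (simp add: newton_mins)
  also have "\<dots> \<subseteq> newton (vert (mins A))" by (rule newton_vert_fin[OF mins_finite])
  also have "\<dots> = newton (vert A)" by (simp add: vert_mins)
  finally show "newton A \<subseteq> newton (vert A)" .
qed

lemma vert_vert: "vert (vert A) = vert (A :: ('n::finite \<Rightarrow> nat) set)"
  using vert_sub[of A] unfolding vert_def[of "vert A"] newton_vert by (auto simp: vert_def)

definition ss :: "('n \<Rightarrow> nat) set \<Rightarrow> ('n \<Rightarrow> nat) set \<Rightarrow> ('n \<Rightarrow> nat) set" where
  "ss A B = {expo_add a b | a b. a \<in> A \<and> b \<in> B}"

lemma fin_below: "finite {a :: 'n::finite \<Rightarrow> nat. a \<le> c}"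
proof -
  have "{a :: 'n \<Rightarrow> nat. a \<le> c} = Pi\<^sub>E UNIV (\<lambda>i. {..c i})"
    by (auto simp: PiE_UNIV_domain Pi_def le_fun_def)
  then show ?thesis by (simp add: finite_PiE)
qed

lemma fin_pairs: "finite {(a, b). expo_add a b = (c :: 'n::finite \<Rightarrow> nat)}"
proof (rule finite_subset)
  show "{(a, b). expo_add a b = c} \<subseteq> {a. a \<le> c} \<times> {b. b \<le> c}"
    by (auto simp: expo_add_def le_fun_def)
  show "finite ({a. a \<le> c} \<times> {b. b \<le> c})" using fin_below by blast
qed

lemma sum_single_pair:
  fixes h :: "('n::finite \<Rightarrow> nat) \<times> ('n \<Rightarrow> nat) \<Rightarrow> 'a::comm_ring_1"
  assumes "expo_add ua va = c"
    and "\<And>a b. expo_add a b = c \<Longrightarrow> (a, b) \<noteq> (ua, va) \<Longrightarrow> h (a, b) = 0"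
  shows "(\<Sum>p \<in> {(a, b). expo_add a b = c}. h p) = h (ua, va)"
proof -
  have mem: "(ua, va) \<in> {(a, b). expo_add a b = c}" using assms(1) by simp
  have "(\<Sum>p \<in> {(a, b). expo_add a b = c}. h p) = h (ua, va) + (\<Sum>p \<in> {(a, b). expo_add a b = c} - {(ua, va)}. h p)"
    using sum.remove[OF fin_pairs mem] .
  also have "(\<Sum>p \<in> {(a, b). expo_add a b = c} - {(ua, va)}. h p) = 0"
    by (rule sum.neutral) (use assms(2) in auto)
  finally show ?thesis by simp
qed

lemma mps_mult_eq: "mps_mult f g c = (\<Sum>p \<in> {(a, b). expo_add a b = c}. f (fst p) * g (snd p))"
  unfolding mps_mult_def by (simp add: case_prod_beta)

lemma mult_single:
  fixes F G :: "('n::finite, 'a::comm_ring_1) mps"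
  assumes "expo_add ua va = c" "\<And>a b. expo_add a b = c \<Longrightarrow> (a, b) \<noteq> (ua, va) \<Longrightarrow> F a * G b = 0"
  shows "mps_mult F G c = F ua * G va"
  unfolding mps_mult_eq
  using sum_single_pair[of ua va c "\<lambda>p. F (fst p) * G (snd p)"] assms by simp

lemma expo_add_zero: "expo_add expo_zero b = b"
  by (simp add: expo_add_def expo_zero_def)

lemma mps_mult_const: "mps_mult (mps_const \<alpha>) (g :: ('n::finite, 'a::comm_ring_1) mps) c = \<alpha> * g c"
proof -
  have "mps_mult (mps_const \<alpha>) g c = (mps_const \<alpha> :: ('n, 'a) mps) expo_zero * g c"
  proof (rule mult_single)
    show "expo_add expo_zero c = c" by (rule expo_add_zero)
    fix a b assume ab: "expo_add a b = c" "(a, b) \<noteq> (expo_zero, c)"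
    show "(mps_const \<alpha> :: ('n, 'a) mps) a * g b = 0"
    proof (cases "a = expo_zero")
      case True
      then have "b = c" using ab(1) by (simp add: expo_add_zero)
      then show ?thesis using ab(2) True by simp
    qed (simp add: mps_const_def)
  qed
  then show ?thesis by (simp add: mps_const_def)
qed

lemma mps_one_const: "mps_one = mps_const 1"
  by (simp add: mps_one_def mps_const_def fun_eq_iff)

lemma mps_mult_one_left: "mps_mult mps_one (g :: ('n::finite, 'a::comm_ring_1) mps) = g"
  by (simp add: fun_eq_iff mps_one_const mps_mult_const)

lemma supp_one: "mps_supp (mps_one :: ('n, 'a::comm_ring_1) mps) = {expo_zero}"
  by (auto simp: mps_supp_def mps_one_def)

lemma supp_mult: "mps_supp (mps_mult f (g :: ('n::finite, 'a::comm_ring_1) mps)) \<subseteq> ss (mps_supp f) (mps_supp g)"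
proof
  fix c assume "c \<in> mps_supp (mps_mult f g)"
  then have "(\<Sum>p \<in> {(a, b). expo_add a b = c}. f (fst p) * g (snd p)) \<noteq> 0"
    by (simp add: mps_supp_def mps_mult_eq)
  then obtain p where p: "p \<in> {(a, b). expo_add a b = c}" "f (fst p) * g (snd p) \<noteq> 0"
    by (meson sum.neutral)
  obtain a b where pab: "p = (a, b)" by (cases p)
  have "f a \<noteq> 0" "g b \<noteq> 0" "c = expo_add a b" using p pab by auto
  then show "c \<in> ss (mps_supp f) (mps_supp g)"
    by (auto simp: ss_def mps_supp_def)
qed

lemma emb_ss: "emb ` ss A B = emb ` A + emb ` B"
proof
  show "emb ` ss A B \<subseteq> emb ` A + emb ` B"
  proof
    fix x assume "x \<in> emb ` ss A B"
    then obtain a b where "x = emb (expo_add a b)" "a \<in> A" "b \<in> B" by (auto simp: ss_def)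
    then show "x \<in> emb ` A + emb ` B" by (simp add: emb_add set_plus_intro)
  qed
  show "emb ` A + emb ` B \<subseteq> emb ` ss A B"
  proof
    fix x assume "x \<in> emb ` A + emb ` B"
    then obtain a b where ab: "x = emb a + emb b" "a \<in> A" "b \<in> B" by (auto simp: set_plus_def)
    then have "expo_add a b \<in> ss A B" by (auto simp: ss_def)
    then show "x \<in> emb ` ss A B" using ab(1) by (simp add: emb_add[symmetric])
  qed
qed

lemma newton_add: assumes "x \<in> newton A" "y \<in> newton B" shows "x + y \<in> newton (ss A B)"
proof -
  obtain c u where cu: "x = c + u" "c \<in> convex hull (emb ` A)" "\<forall>i. 0 \<le> u $ i"
    using assms(1) unfolding newton_def by auto
  obtain d v where dv: "y = d + v" "d \<in> convex hull (emb ` B)" "\<forall>i. 0 \<le> v $ i"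
    using assms(2) unfolding newton_def by auto
  have "c + d \<in> convex hull (emb ` A) + convex hull (emb ` B)"
    using cu(2) dv(2) by (auto simp: set_plus_def)
  then have "c + d \<in> convex hull (emb ` ss A B)"
    by (simp add: emb_ss convex_hull_set_plus)
  then have "(c + d) + (u + v) \<in> newton (ss A B)"
    using newton_up[OF hull_in_newton, of "c + d" "ss A B" "u + v"] cu(3) dv(3) by auto
  then show ?thesis by (simp add: cu(1) dv(1) algebra_simps)
qed

lemma newton_ss_mono:
  assumes "newton A \<subseteq> newton A'" "newton B \<subseteq> newton B'"
  shows "newton (ss A B) \<subseteq> newton (ss A' B')"
proof (rule newton_sub, clarify)
  fix e assume "e \<in> ss A B"
  then obtain a b where "e = expo_add a b" "a \<in> A" "b \<in> B" by (auto simp: ss_def)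
  moreover have "emb a \<in> newton A'" "emb b \<in> newton B'"
    using assms emb_in_newton calculation by blast+
  ultimately show "emb e \<in> newton (ss A' B')" by (simp add: emb_add newton_add)
qed

lemma ext_unique:
  fixes x y x' y' :: "real^'n"
  assumes "p extreme_point_of Z" "x + y' \<in> Z" "x' + y \<in> Z" "p = x + y" "p = x' + y'"
  shows "x = x' \<and> y = y'"
proof -
  have c1a: "p $ i = x $ i + y $ i" for i using assms(4) by simp
  have c1b: "p $ i = x' $ i + y' $ i" for i using assms(5) by simp
  note c1 = c1a c1b
  have "p $ i = midpoint (x + y') (x' + y) $ i" for i
    using c1[of i] by (simp add: midpoint_def; linarith)
  then have "p = midpoint (x + y') (x' + y)" by (simp add: vec_eq_iff)
  from ext_mid[OF assms(1,2,3) this] have c2: "x $ i + y' $ i = x' $ i + y $ i" for i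
    by (simp add: vec_eq_iff)
  have "x $ i = x' $ i \<and> y $ i = y' $ i" for i using c1[of i] c2[of i] by linarith
  then show ?thesis by (simp add: vec_eq_iff)
qed

lemma vert_ss_supp:
  fixes f g :: "('n::finite, 'a::idom) mps"
  assumes "e \<in> vert (ss (mps_supp f) (mps_supp g))"
  shows "mps_mult f g e \<noteq> 0"
proof -
  let ?S = "ss (mps_supp f) (mps_supp g)"
  have ext: "emb e extreme_point_of newton ?S" and eS: "e \<in> ?S" using assms by (auto simp: vert_def)
  obtain ua va where ava: "e = expo_add ua va" "f ua \<noteq> 0" "g va \<noteq> 0"
    using eS by (auto simp: ss_def mps_supp_def)
  have "mps_mult f g e = f ua * g va"
  proof (rule mult_single)
    show "expo_add ua va = e" using ava by simp
    fix a b assume ab: "expo_add a b = e" "(a, b) \<noteq> (ua, va)"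
    show "f a * g b = 0"
    proof (rule ccontr)
      assume "\<not> (f a * g b = 0)"
      then have fa: "f a \<noteq> 0" "g b \<noteq> 0" by auto
      have m1: "expo_add a va \<in> ?S" "expo_add ua b \<in> ?S"
        using fa ava by (auto simp: ss_def mps_supp_def)
      have i1: "emb a + emb va \<in> newton ?S" using emb_in_newton[OF m1(1)] by (simp add: emb_add)
      have i2: "emb ua + emb b \<in> newton ?S" using emb_in_newton[OF m1(2)] by (simp add: emb_add)
      have i3: "emb e = emb a + emb b" using ab(1) by (simp add: emb_add[symmetric])
      have i4: "emb e = emb ua + emb va" using ava(1) by (simp add: emb_add)
      have "emb a = emb ua \<and> emb b = emb va"
        by (rule ext_unique[OF ext i1 i2 i3 i4])
      then show False using ab(2) emb_inj by blast
    qed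
  qed
  then show ?thesis using ava by simp
qed

lemma newton_mult:
  fixes f g :: "('n::finite, 'a::idom) mps"
  shows "newton (mps_supp (mps_mult f g)) = newton (ss (mps_supp f) (mps_supp g))"
proof
  show "newton (mps_supp (mps_mult f g)) \<subseteq> newton (ss (mps_supp f) (mps_supp g))"
    by (rule newton_mono[OF supp_mult])
  have "vert (ss (mps_supp f) (mps_supp g)) \<subseteq> mps_supp (mps_mult f g)"
    using vert_ss_supp by (auto simp: mps_supp_def)
  then have "newton (vert (ss (mps_supp f) (mps_supp g))) \<subseteq> newton (mps_supp (mps_mult f g))"
    by (rule newton_mono)
  then show "newton (ss (mps_supp f) (mps_supp g)) \<subseteq> newton (mps_supp (mps_mult f g))"
    by (simp add: newton_vert)
qed

lemma ext_sum_left: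
  fixes x y :: "real^'n"
  assumes "p extreme_point_of Z" "\<And>a b. a \<in> X \<Longrightarrow> b \<in> Y \<Longrightarrow> a + b \<in> Z"
    "x \<in> X" "y \<in> Y" "p = x + y"
  shows "x extreme_point_of X"
  unfolding extreme_point_of_def
proof (intro conjI ballI)
  show "x \<in> X" by fact
  fix a b assume ab: "a \<in> X" "b \<in> X"
  show "x \<notin> open_segment a b"
  proof
    assume "x \<in> open_segment a b"
    then have "y + x \<in> open_segment (y + a) (y + b)" by simp
    moreover have "y + a \<in> Z" "y + b \<in> Z" using assms(2)[OF ab(1) assms(4)] assms(2)[OF ab(2) assms(4)]
      by (simp_all add: add.commute)
    ultimately show False using assms(1,5) unfolding extreme_point_of_def by (simp add: add.commute)
  qed
qed

definition XX :: "('n::finite, 'a::comm_ring_1) mps \<Rightarrow> nat \<Rightarrow> (real^'n) set" where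
  "XX g m = newton (mps_supp (mps_pow g m))"

lemma pow_Suc: "mps_pow g (Suc m) = mps_mult (mps_pow g m) g"
  by (simp add: mps_pow_def)

lemma pow_one: "mps_pow (g :: ('n::finite, 'a::comm_ring_1) mps) (Suc 0) = g"
  by (simp add: mps_pow_def mps_mult_one_left)

lemma XX_Suc: "XX (g :: ('n::finite, 'a::idom) mps) (Suc m) = newton (ss (mps_supp (mps_pow g m)) (mps_supp g))"
  by (simp add: XX_def pow_Suc newton_mult)

lemma XX_1: "XX (g :: ('n::finite, 'a::idom) mps) 1 = newton (mps_supp g)"
  unfolding XX_def One_nat_def pow_one ..

lemma XX_1s [simp]: "XX (g :: ('n::finite, 'a::idom) mps) (Suc 0) = newton (mps_supp g)"
  using XX_1[of g] by simp

declare pow_one [simp]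

lemma XX_add: "x \<in> XX g m \<Longrightarrow> y \<in> XX g 1 \<Longrightarrow> x + y \<in> XX (g :: ('n::finite, 'a::idom) mps) (Suc m)"
  unfolding XX_Suc XX_1 by (rule newton_add) (simp_all add: XX_def)

lemma XX_0: "0 \<in> XX (g :: ('n::finite, 'a::idom) mps) 0"
proof -
  have "emb expo_zero \<in> newton (mps_supp (mps_one :: ('n, 'a) mps))"
    by (rule emb_in_newton) (simp add: supp_one)
  then show ?thesis by (simp add: XX_def mps_pow_def emb_zero)
qed

lemma XX_smult: assumes "emb v \<in> XX (g :: ('n::finite, 'a::idom) mps) 1"
  shows "emb (\<lambda>i. m * v i) \<in> XX g m"
proof (induction m)
  case 0
  have "(\<lambda>i. 0 * v i) = expo_zero" by (simp add: expo_zero_def fun_eq_iff)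
  then show ?case using XX_0 by (simp add: emb_zero)
next
  case (Suc m)
  have "(\<lambda>i. Suc m * v i) = expo_add (\<lambda>i. m * v i) v" by (simp add: expo_add_def fun_eq_iff)
  then show ?case using XX_add[OF Suc assms] by (simp add: emb_add)
qed

lemma prod_mono:
  fixes g :: "('n::finite, 'a::idom) mps"
    and H :: "nat \<Rightarrow> ('n, 'a) mps"
  assumes "\<And>k. newton (mps_supp (H k)) \<subseteq> XX g 1"
  shows "newton (mps_supp (mps_prod H m)) \<subseteq> XX g m"
proof (induction m)
  case 0 then show ?case by (simp add: XX_def mps_pow_def)
next
  case (Suc m)
  have "newton (mps_supp (mps_prod H (Suc m))) = newton (ss (mps_supp (mps_prod H m)) (mps_supp (H m)))"
    by (simp add: newton_mult)
  also have "\<dots> \<subseteq> newton (ss (mps_supp (mps_pow g m)) (mps_supp g))"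
    by (rule newton_ss_mono) (use Suc assms[of m] in \<open>simp_all add: XX_def XX_1\<close>)
  also have "\<dots> = XX g (Suc m)" by (simp add: XX_Suc)
  finally show ?case .
qed

lemma supp_in_newton: "e \<in> mps_supp F \<Longrightarrow> emb e \<in> newton (mps_supp F)"
  by (rule emb_in_newton)

lemma Q:
  fixes g :: "('n::finite, 'a::idom) mps"
  assumes "emb e extreme_point_of XX g (Suc n)"
  shows "\<exists>v. e = (\<lambda>i. Suc n * v i) \<and> emb v extreme_point_of XX g 1 \<and>
     (\<forall>H :: nat \<Rightarrow> ('n, 'a) mps. (\<forall>k. newton (mps_supp (H k)) \<subseteq> XX g 1) \<longrightarrow> mps_prod H (Suc n) e = (\<Prod>k\<le>n. H k v))"
  using assms
proof (induction n arbitrary: e)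
  case 0
  have "e = (\<lambda>i. Suc 0 * e i)" by simp
  moreover have "mps_prod H (Suc 0) e = (\<Prod>k\<le>0. H k e)" for H :: "nat \<Rightarrow> ('n, 'a) mps"
    by (simp add: mps_mult_one_left)
  ultimately show ?case using "0.prems" by auto
next
  case (Suc n)
  let ?Z = "XX g (Suc (Suc n))"
  have ext: "emb e extreme_point_of ?Z" by fact
  have "emb e \<in> emb ` mps_supp (mps_pow g (Suc (Suc n)))"
    using ext_in_emb[of "emb e"] ext by (simp add: XX_def)
  then have "e \<in> mps_supp (mps_pow g (Suc (Suc n)))" using emb_inj by blast
  then have "e \<in> ss (mps_supp (mps_pow g (Suc n))) (mps_supp g)"
    using supp_mult[of "mps_pow g (Suc n)" g] by (auto simp: pow_Suc)
  then obtain a0 b0 where ab0: "e = expo_add a0 b0" "a0 \<in> mps_supp (mps_pow g (Suc n))" "b0 \<in> mps_supp g"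
    by (auto simp: ss_def)
  have a0X: "emb a0 \<in> XX g (Suc n)" using ab0(2) by (simp add: XX_def emb_in_newton)
  have b0X: "emb b0 \<in> XX g 1" using ab0(3) by (simp add: XX_1 emb_in_newton)
  have ee: "emb e = emb a0 + emb b0" using ab0(1) by (simp add: emb_add)
  have "emb a0 extreme_point_of XX g (Suc n)"
    by (rule ext_sum_left[OF ext _ a0X b0X ee]) (rule XX_add)
  from Suc.IH[OF this] obtain v where v: "a0 = (\<lambda>i. Suc n * v i)" "emb v extreme_point_of XX g 1"
    "\<And>H :: nat \<Rightarrow> ('n, 'a) mps. (\<forall>k. newton (mps_supp (H k)) \<subseteq> XX g 1) \<Longrightarrow> mps_prod H (Suc n) a0 = (\<Prod>k\<le>n. H k v)"
    by blast
  have vX: "emb v \<in> XX g 1" using v(2) by (simp add: extreme_point_of_def)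
  have nvX: "emb (\<lambda>i. n * v i) \<in> XX g n" by (rule XX_smult[OF vX])
  have a0s: "emb a0 = emb (\<lambda>i. n * v i) + emb v"
    unfolding v(1) by (simp add: emb_def vec_eq_iff algebra_simps)
  have "emb b0 = emb v"
  proof -
    have i1: "emb a0 + emb v \<in> ?Z" using XX_add[OF a0X vX] .
    have "emb (\<lambda>i. n * v i) + emb b0 \<in> XX g (Suc n)" using XX_add[OF nvX b0X] .
    then have i2: "(emb (\<lambda>i. n * v i) + emb b0) + emb b0 \<in> ?Z" using XX_add[OF _ b0X] by blast
    have i3: "emb e = (emb (\<lambda>i. n * v i) + emb b0) + emb v" using ee a0s by (simp add: algebra_simps)
    show ?thesis using ext_unique[OF ext i1 i2 ee i3] by simp
  qed
  then have b0v: "b0 = v" using emb_inj by blast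
  have e_eq: "e = (\<lambda>i. Suc (Suc n) * v i)"
    using ab0(1) v(1) b0v by (simp add: expo_add_def fun_eq_iff)
  have formula: "mps_prod H (Suc (Suc n)) e = (\<Prod>k\<le>Suc n. H k v)"
    if H: "\<forall>k. newton (mps_supp (H k)) \<subseteq> XX g 1" for H :: "nat \<Rightarrow> ('n, 'a) mps"
  proof -
    have "mps_prod H (Suc (Suc n)) e = mps_mult (mps_prod H (Suc n)) (H (Suc n)) e" by simp
    also have "\<dots> = mps_prod H (Suc n) a0 * H (Suc n) v"
    proof (rule mult_single)
      show "expo_add a0 v = e" using ab0(1) b0v by simp
      fix a b assume ab: "expo_add a b = e" "(a, b) \<noteq> (a0, v)"
      show "mps_prod H (Suc n) a * H (Suc n) b = 0"
      proof (rule ccontr)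
        assume "mps_prod H (Suc n) a * H (Suc n) b \<noteq> 0"
        then have nz: "a \<in> mps_supp (mps_prod H (Suc n))" "b \<in> mps_supp (H (Suc n))"
          by (auto simp: mps_supp_def)
        have aX: "emb a \<in> XX g (Suc n)"
          using prod_mono[of H g "Suc n"] H emb_in_newton[OF nz(1)] by blast
        have bX: "emb b \<in> XX g 1" using H emb_in_newton[OF nz(2)] by blast
        have i1: "emb a + emb v \<in> ?Z" using XX_add[OF aX vX] .
        have i2: "emb a0 + emb b \<in> ?Z" using XX_add[OF a0X bX] .
        have i3: "emb e = emb a + emb b" using ab(1) by (simp add: emb_add[symmetric])
        have i4: "emb e = emb a0 + emb v" using ee b0v by simp
        have "emb a = emb a0 \<and> emb b = emb v" by (rule ext_unique[OF ext i1 i2 i3 i4])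
        then show False using ab(2) emb_inj by blast
      qed
    qed
    also have "\<dots> = (\<Prod>k\<le>n. H k v) * H (Suc n) v" using v(3)[OF H] by simp
    also have "\<dots> = (\<Prod>k\<le>Suc n. H k v)" by (simp add: prod.atMost_Suc)
    finally show ?thesis .
  qed
  show ?case using e_eq v(2) formula by blast
qed

lemma vb_times_one1: "vb_times X vb_one = vert X"
proof -
  have "{expo_add x y | x y. x \<in> X \<and> y \<in> vb_one} = X"
    by (auto simp: vb_one_def expo_add_def expo_zero_def)
  then show ?thesis by (simp add: vb_times_def)
qed

lemma vb_times_one2: "vb_times vb_one X = vert X"
proof -
  have "{expo_add x y | x y. x \<in> vb_one \<and> y \<in> X} = X"
    by (auto simp: vb_one_def expo_add_def expo_zero_def)
  then show ?thesis by (simp add: vb_times_def)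
qed

lemma vb_le_vert: "vb_le (vert A) (vert B) \<longleftrightarrow> newton A \<subseteq> newton (B :: ('n::finite \<Rightarrow> nat) set)"
proof
  assume "vb_le (vert A) (vert B)"
  then have eq: "vert (vert A \<union> vert B) = vert B" by (simp add: vb_le_def vb_plus_def)
  have "newton A = newton (vert A)" by (simp add: newton_vert)
  also have "\<dots> \<subseteq> newton (vert A \<union> vert B)" by (rule newton_mono) auto
  also have "\<dots> = newton (vert (vert A \<union> vert B))" by (simp add: newton_vert)
  also have "\<dots> = newton B" by (simp add: eq newton_vert)
  finally show "newton A \<subseteq> newton B" .
next
  assume sub: "newton A \<subseteq> newton B"
  have NU: "newton (vert A \<union> vert B) = newton B"
  proof
    show "newton (vert A \<union> vert B) \<subseteq> newton B"
    proof (rule newton_sub, clarify)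
      fix e assume "e \<in> vert A \<union> vert B"
      then show "emb e \<in> newton B"
        using sub emb_in_newton vert_sub by blast
    qed
    have "newton B = newton (vert B)" by (simp add: newton_vert)
    also have "\<dots> \<subseteq> newton (vert A \<union> vert B)" by (rule newton_mono) auto
    finally show "newton B \<subseteq> newton (vert A \<union> vert B)" .
  qed
  have "vert (vert A \<union> vert B) = vert B"
  proof
    show "vert (vert A \<union> vert B) \<subseteq> vert B"
    proof
      fix e assume e: "e \<in> vert (vert A \<union> vert B)"
      then have "emb e extreme_point_of newton (vert A \<union> vert B)"
        unfolding vert_def[of "vert A \<union> vert B"] by blast
      then have ext: "emb e extreme_point_of newton B" by (simp only: NU)
      then have "emb e \<in> emb ` B" by (rule ext_in_emb)
      then have "e \<in> B" using emb_inj by blast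
      with ext show "e \<in> vert B" by (simp add: vert_def)
    qed
    show "vert B \<subseteq> vert (vert A \<union> vert B)"
      unfolding vert_def[of "vert A \<union> vert B"] NU by (auto simp: vert_def)
  qed
  then show "vb_le (vert A) (vert B)" by (simp add: vb_le_def vb_plus_def)
qed

theorem lemma4p8:
  fixes f g :: "('n::finite, 'a::field_char_0) mps"
  assumes "g \<noteq> (\<lambda>_. 0)"
    and "vbf_le (trop_frac f g) vbf_one"
  shows "\<exists>n \<ge> 1. \<exists>\<alpha> :: nat \<Rightarrow> 'a.
           vbf_ll (trop_frac (mps_prod (\<lambda>k. mps_diff f (mps_mult (mps_const (\<alpha> k)) g)) n)
                             (mps_pow g n))
                  vbf_one"
proof -
  have hyp: "newton (mps_supp f) \<subseteq> newton (mps_supp g)"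
    using assms(2) by (simp add: vbf_le_def trop_frac_def vbf_one_def trop_def vb_times_one1 vb_le_vert newton_vert)
  define V where "V = vert (mps_supp g)"
  have finV: "finite V" unfolding V_def by (rule vert_finite)
  have "mps_supp g \<noteq> {}" using assms(1) by (auto simp: mps_supp_def)
  then have "newton (vert (mps_supp g)) \<noteq> {}" by (simp add: newton_vert newton_ne)
  then have "V \<noteq> {}" unfolding V_def using newton_empty by auto
  then obtain N where N: "card V = Suc N" using finV by (metis card_0_eq not0_implies_Suc)
  obtain h where h: "bij_betw h {0..<card V} V" using ex_bij_betw_nat_finite[OF finV] by blast
  define \<alpha> where "\<alpha> k = f (h k) / g (h k)" for k
  define H where "H = (\<lambda>k. mps_diff f (mps_mult (mps_const (\<alpha> k)) g))"
  have Hval: "H k e = f e - \<alpha> k * g e" for k e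
    by (simp add: H_def mps_diff_def mps_mult_const)
  have HX: "\<forall>k. newton (mps_supp (H k)) \<subseteq> XX g 1"
  proof
    fix k
    show "newton (mps_supp (H k)) \<subseteq> XX g 1"
      unfolding XX_1
    proof (rule newton_sub, clarify)
      fix e assume "e \<in> mps_supp (H k)"
      then have "f e \<noteq> 0 \<or> g e \<noteq> 0" by (auto simp: mps_supp_def Hval)
      then show "emb e \<in> newton (mps_supp g)"
        using hyp emb_in_newton[of e "mps_supp f"] emb_in_newton[of e "mps_supp g"]
        by (auto simp: mps_supp_def)
    qed
  qed
  let ?P = "mps_prod H (Suc N)"
  let ?G = "mps_pow g (Suc N)"
  have p1: "newton (mps_supp ?P) \<subseteq> newton (mps_supp ?G)"
    using prod_mono[of H g "Suc N"] HX by (simp add: XX_def)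
  have p2: "?P e = 0" if e: "e \<in> vert (mps_supp ?G)" for e
  proof -
    have "emb e extreme_point_of XX g (Suc N)" using e by (simp add: vert_def XX_def)
    from Q[OF this] obtain v where v: "emb v extreme_point_of XX g 1"
      "\<And>H' :: nat \<Rightarrow> ('n, 'a) mps. (\<forall>k. newton (mps_supp (H' k)) \<subseteq> XX g 1) \<Longrightarrow> mps_prod H' (Suc N) e = (\<Prod>k\<le>N. H' k v)"
      by blast
    have ext: "emb v extreme_point_of newton (mps_supp g)" using v(1) by (simp add: XX_1)
    then have "emb v \<in> emb ` mps_supp g" by (rule ext_in_emb)
    then have "v \<in> mps_supp g" using emb_inj by blast
    with ext have vV: "v \<in> V" by (simp add: V_def vert_def)
    then have "v \<in> h ` {0..<card V}" using h by (simp add: bij_betw_def)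
    then obtain k where k: "k < card V" "h k = v" by auto
    have gv: "g v \<noteq> 0" using \<open>v \<in> mps_supp g\<close> by (simp add: mps_supp_def)
    have "H k v = 0" using gv k by (simp add: Hval \<alpha>_def)
    moreover have "k \<in> {..N}" using k N by simp
    ultimately have "(\<Prod>k\<le>N. H k v) = 0" by (meson finite_atMost prod_zero_iff)
    then show ?thesis using v(2)[OF HX] by simp
  qed
  have goal: "vbf_ll (trop_frac ?P ?G) vbf_one"
  proof -
    have le: "vb_le (vert (mps_supp ?P)) (vert (mps_supp ?G))" using p1 by (simp add: vb_le_vert)
    have dis: "vert (mps_supp ?P) \<inter> vert (mps_supp ?G) = {}"
    proof (rule ccontr)
      assume "vert (mps_supp ?P) \<inter> vert (mps_supp ?G) \<noteq> {}"
      then obtain e where "e \<in> vert (mps_supp ?P)" "e \<in> vert (mps_supp ?G)" by blast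
      then have "?P e \<noteq> 0" "?P e = 0" using p2 vert_sub[of "mps_supp ?P"] by (auto simp: mps_supp_def)
      then show False by simp
    qed
    show ?thesis
      using le dis
      by (simp add: vbf_ll_def vbf_le_def trop_frac_def vbf_one_def trop_def vb_times_one1
          vb_times_one2 vert_vert vb_ll_def)
  qed
  show ?thesis
    by (rule exI[of _ "Suc N"], simp, rule exI[of _ \<alpha>]) (use goal in \<open>simp add: H_def\<close>)
qed

end
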